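(* Assume complete resource pooling and let $B^s=B\prod_{j=1}^J\beta_{s_j}$. For every permutation $(S_1,\ldots,S_J)$ of $\mathcal{S}$, binary words $w_1,\ldots,w_{J-1}$ and nonnegative integers $n_\ell,m_\ell,r_\ell$, with $\alpha_{(\ell)}=\alpha_{\mathcal{U}(\{S_1,\ldots,S_\ell\})}$ and the convention $0^0=1$, the processes $W,U,X,Y,V,R$ defined below have stationary distributions $$\pi_W(S_1,w_1,\ldots,w_{J-1},S_J)=B^s\prod_{\ell=1}^{J-1}\alpha_{(\ell)}^{\#0(w_\ell)}\beta_{\{S_{\ell+1},\ldots,S_J\}}^{\#1(w_\ell)},$$ $$\pi_U(S_1,n_1,m_1,\ldots,n_{J-1},m_{J-1},S_J)=B^s\prod_{\ell=1}^{J-1}\binom{n_\ell+m_\ell}{n_\ell}\alpha_{(\ell)}^{n_\ell}\beta_{\{S_{\ell+1},\ldots,S_J\}}^{m_\ell},$$ $$\pi_X(S_1,n_1,\ldots,n_{J-1},S_J)=B^s\prod_{\ell=1}^{J-1}\frac{\alpha_{(\ell)}^{n_\ell}}{\beta_{\{S_1,\ldots,S_\ell\}}^{n_\ell+1}},\qquad \pi_Y(S_1,m_1,\ldots,m_{J-1},S_J)=B^s\prod_{\ell=1}^{J-1}\frac{\beta_{\{S_{\ell+1},\ldots,S_J\}}^{m_\ell}}{\alpha_{\mathcal{C}(\{S_{\ell+1},\ldots,S_J\})}^{m_\ell+1}},$$ $$\pi_V(S_1,r_1,\ldots,r_{J-1},S_J)=B^s\prod_{\ell=1}^{J-1}\big(\alpha_{(\ell)}+\beta_{\{S_{\ell+1},\ldots,S_J\}}\big)^{r_\ell},\qquad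 \pi_R(S_1,\ldots,S_J)=B^s\prod_{\ell=1}^{J-1}\big(\beta_{\{S_1,\ldots,S_\ell\}}-\alpha_{(\ell)}\big)^{-1}.$$
   Context: Setting: finite type sets $\mathcal{C}=\{c_1,\ldots,c_I\}$, $\mathcal{S}=\{s_1,\ldots,s_J\}$, connected bipartite compatibility graph $G=(\mathcal{C},\mathcal{S},\mathcal{E})$, independent i.i.d. sequences $(c^m)_{m\in\mathbb{Z}}\sim\alpha$, $(s^n)_{n\in\mathbb{Z}}\sim\beta$ with positive probabilities. Notation: $\mathcal{C}(S)$ = customer types compatible with some type in $S$; $\mathcal{U}(S)=\mathcal{C}\setminus\mathcal{C}(\mathcal{S}\setminus S)$; $\alpha_C=\sum_{c\in C}\alpha_c$, $\beta_S=\sum_{s\in S}\beta_s$. Complete resource pooling: $\beta_S>\alpha_{\mathcal{U}(S)}$ for all nonempty proper $S\subsetneq\mathcal{S}$. $A$ is the a.s. unique (perfect) FCFS matching over $\mathbb{Z}$ (for each $(m,n)\in A$, every compatible $s^l$, $l<n$, is matched to some $c^k$, $k<m$, and every compatible $c^k$, $k<m$, to some $s^l$, $l<n$); for $(m,n)\in A$, $\tilde{s}^m=s^n$. At time $N$ customer-line position $m$ holds $\tilde{s}^m$ if $c^m$ is matched to a server of index $\le N$ ("exchanged server") and $c^m$ otherwise ("unmatched customer"). $\underline{M}$ = first position with an unmatched customer, $\overline{M}$ = last position with an exchanged server, $\underline{N}$ = largest $p\le\overline{M}$ such that positions $p,\ldots,\overline{M}$ contain exchanged servers of all $J$ types. $\mathcal{Z}_N$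 is the word in positions $\underline{N},\ldots,\overline{M}$; it has stationary distribution $\pi_{\mathcal{Z}}(\mathfrak{z})=B\prod_i\alpha_{c_i}^{\#c_i}\prod_j\beta_{s_j}^{\#s_j}$ for a constant $B>0$ (counts of types in $\mathfrak{z}$). Write $\mathcal{Z}_N=(S_1,\mathfrak{w}_1,S_2,\ldots,\mathfrak{w}_{J-1},S_J)$: $S_J$ is the type of the last entry $\tilde{s}^{\overline{M}}$, and recursively, for $j<J$, $S_j$ is the type of the last exchanged server in the word whose type differs from $S_{j+1},\ldots,S_J$; $\mathfrak{w}_\ell$ is the subword strictly between the occurrences of $S_\ell$ and $S_{\ell+1}$. $W_N=(S_1,w_1,\ldots,w_{J-1},S_J)$ where $w_\ell$ replaces each unmatched customer of $\mathfrak{w}_\ell$ by $0$ and each exchanged server by $1$; $\#0(w)$, $\#1(w)$ count zeros and ones. $X_N=(S_1,n_1,\ldots,n_{J-1},S_J)$ with $n_\ell=\#0(w_\ell)$; $Y_N=(S_1,m_1,\ldots,m_{J-1},S_J)$ with $m_\ell=\#1(w_\ell)$; $U_N=(S_1,n_1,m_1,\ldots,n_{J-1},m_{J-1},S_J)$; $V_N=(S_1,n_1+m_1,\ldots,n_{J-1}+m_{J-1},S_J)$; $R_N=(S_1,\ldots,S_J)$. *)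

theory Defs
  imports "HOL-Probability.Probability_Mass_Function"
begin

text \<open>Letters of the word Z_N: an unmatched customer of type c, or an exchanged server of type s.\<close>
datatype ('c, 's) letter = Cust 'c | Serv 's

text \<open>Compatibility graph: E c s means customer type c and server type s are compatible.\<close>
definition bip_adj :: "('c \<Rightarrow> 's \<Rightarrow> bool) \<Rightarrow> ('c + 's) \<Rightarrow> ('c + 's) \<Rightarrow> bool" where
  "bip_adj E x y \<longleftrightarrow> (\<exists>c s. (x = Inl c \<and> y = Inr s \<or> x = Inr s \<and> y = Inl c) \<and> E c s)"

definition bip_connected :: "('c \<Rightarrow> 's \<Rightarrow> bool) \<Rightarrow> bool" where
  "bip_connected E \<longleftrightarrow> (\<forall>x y. (bip_adj E)\<^sup>*\<^sup>* x y)"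

definition Cset :: "('c \<Rightarrow> 's \<Rightarrow> bool) \<Rightarrow> 's set \<Rightarrow> 'c set" where
  "Cset E T = {c. \<exists>s\<in>T. E c s}"

definition Uset :: "('c \<Rightarrow> 's \<Rightarrow> bool) \<Rightarrow> 's set \<Rightarrow> 'c set" where
  "Uset E T = UNIV - Cset E (UNIV - T)"

definition complete_resource_pooling ::
  "('c::finite \<Rightarrow> 's::finite \<Rightarrow> bool) \<Rightarrow> ('c \<Rightarrow> real) \<Rightarrow> ('s \<Rightarrow> real) \<Rightarrow> bool" where
  "complete_resource_pooling E \<alpha> \<beta> \<longleftrightarrow>
     (\<forall>T. T \<noteq> {} \<and> T \<noteq> UNIV \<longrightarrow> sum \<beta> T > sum \<alpha> (Uset E T))"

definition letter_weight :: "('c \<Rightarrow> real) \<Rightarrow> ('s \<Rightarrow> real) \<Rightarrow> ('c, 's) letter \<Rightarrow> real" where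
  "letter_weight \<alpha> \<beta> x = (case x of Cust c \<Rightarrow> \<alpha> c | Serv s \<Rightarrow> \<beta> s)"

definition zweight :: "('c \<Rightarrow> real) \<Rightarrow> ('s \<Rightarrow> real) \<Rightarrow> ('c, 's) letter list \<Rightarrow> real" where
  "zweight \<alpha> \<beta> z = prod_list (map (letter_weight \<alpha> \<beta>) z)"

text \<open>State space of Z_N: words S_1 w_1 S_2 ... w_{J-1} S_J with (S_1,...,S_J) a permutation
  of the server types, where w_l (l = 1..J-1) consists of unmatched customers with types in
  U({S_1..S_l}) and exchanged servers with types in {S_{l+1},...,S_J}.
  Lists are 0-indexed: segment index l here corresponds to l+1 in the paper.\<close>
definition assemble :: "'s list \<Rightarrow> ('c, 's) letter list list \<Rightarrow> ('c, 's) letter list" where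
  "assemble S ws = Serv (hd S) # concat (map2 (\<lambda>w s. w @ [Serv s]) ws (tl S))"

definition admissible_seg :: "('c \<Rightarrow> 's \<Rightarrow> bool) \<Rightarrow> 's list \<Rightarrow> nat \<Rightarrow> ('c, 's) letter list \<Rightarrow> bool" where
  "admissible_seg E S l w \<longleftrightarrow>
     (\<forall>x\<in>set w. case x of Cust c \<Rightarrow> c \<in> Uset E (set (take (Suc l) S))
                        | Serv s \<Rightarrow> s \<in> set (drop (Suc l) S))"

definition Zspace :: "('c \<Rightarrow> 's::finite \<Rightarrow> bool) \<Rightarrow> ('c, 's) letter list set" where
  "Zspace E = {assemble S ws | S ws. distinct S \<and> set S = UNIV \<and> length ws = CARD('s) - 1
                 \<and> (\<forall>l < length ws. admissible_seg E S l (ws ! l))}"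

text \<open>Parsing a word as in the paper: S_J is the type of the last server; S_j is the type of the
  last server whose type differs from S_{j+1},...,S_J (i.e. server types ordered by last
  occurrence); w_l is the subword strictly between the (last) occurrences of S_l and S_{l+1}.\<close>
definition serv_types :: "('c, 's) letter list \<Rightarrow> 's list" where
  "serv_types z = List.map_filter (\<lambda>x. case x of Serv s \<Rightarrow> Some s | Cust _ \<Rightarrow> None) z"

definition Sseq :: "('c, 's) letter list \<Rightarrow> 's list" where
  "Sseq z = remdups (serv_types z)"

definition lastpos :: "('c, 's) letter list \<Rightarrow> 's \<Rightarrow> nat" where
  "lastpos z s = Max {i. i < length z \<and> z ! i = Serv s}"

definition seg :: "('c, 's) letter list \<Rightarrow> nat \<Rightarrow> ('c, 's) letter list" where
  "seg z l = (let a = lastpos z (Sseq z ! l); b = lastpos z (Sseq z ! Suc l)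
              in take (b - a - 1) (drop (Suc a) z))"

definition segs :: "('c, 's) letter list \<Rightarrow> ('c, 's) letter list list" where
  "segs z = map (seg z) [0..<length (Sseq z) - 1]"

text \<open>Binary encoding: unmatched customer \<mapsto> 0 (False), exchanged server \<mapsto> 1 (True).\<close>
definition is_serv :: "('c, 's) letter \<Rightarrow> bool" where
  "is_serv x = (case x of Serv _ \<Rightarrow> True | Cust _ \<Rightarrow> False)"

definition binw :: "('c, 's) letter list \<Rightarrow> bool list" where
  "binw w = map is_serv w"

definition n0 :: "bool list \<Rightarrow> nat" where "n0 w = length (filter Not w)"
definition n1 :: "bool list \<Rightarrow> nat" where "n1 w = length (filter id w)"

definition W_of :: "('c, 's) letter list \<Rightarrow> 's list \<times> bool list list" where
  "W_of z = (Sseq z, map binw (segs z))"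
definition U_of :: "('c, 's) letter list \<Rightarrow> 's list \<times> (nat \<times> nat) list" where
  "U_of z = (Sseq z, map (\<lambda>w. (n0 (binw w), n1 (binw w))) (segs z))"
definition X_of :: "('c, 's) letter list \<Rightarrow> 's list \<times> nat list" where
  "X_of z = (Sseq z, map (\<lambda>w. n0 (binw w)) (segs z))"
definition Y_of :: "('c, 's) letter list \<Rightarrow> 's list \<times> nat list" where
  "Y_of z = (Sseq z, map (\<lambda>w. n1 (binw w)) (segs z))"
definition V_of :: "('c, 's) letter list \<Rightarrow> 's list \<times> nat list" where
  "V_of z = (Sseq z, map (\<lambda>w. n0 (binw w) + n1 (binw w)) (segs z))"
definition R_of :: "('c, 's) letter list \<Rightarrow> 's list" where
  "R_of z = Sseq z"

end

theory Submission
  imports Defs "HOL-Analysis.Generalised_Binomial_Theorem"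
begin

lemma serv_types_simps[simp]:
  "serv_types [] = []"
  "serv_types (Serv s # xs) = s # serv_types xs"
  "serv_types (Cust c # xs) = serv_types xs"
  "serv_types (xs @ ys) = serv_types xs @ serv_types ys"
  by (simp_all add: serv_types_def map_filter_def)

lemma set_serv_types: "s \<in> set (serv_types z) \<longleftrightarrow> Serv s \<in> set z"
proof (induction z)
  case (Cons x z) then show ?case by (cases x) auto
qed simp

lemma assemble_single[simp]: "assemble [s] ws = [Serv s]"
  by (simp add: assemble_def)

lemma assemble_cons2:
  "assemble (s0 # s1 # S) (w # ws) = Serv s0 # w @ assemble (s1 # S) ws"
  by (simp add: assemble_def)

lemma lastpos_append:
  assumes "Serv s \<in> set ys"
  shows "lastpos (xs @ ys) s = length xs + lastpos ys s"
proof -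
  let ?J = "{i. i < length ys \<and> ys ! i = Serv s}"
  have fin: "finite ?J" by simp
  have ne: "?J \<noteq> {}" using assms by (auto simp: in_set_conv_nth)
  have jin: "lastpos ys s \<in> ?J" unfolding lastpos_def using Max_in[OF fin ne] .
  show ?thesis unfolding lastpos_def[of "xs @ ys"]
  proof (rule Max_eqI)
    show "finite {i. i < length (xs @ ys) \<and> (xs @ ys) ! i = Serv s}" by simp
  next
    fix i assume i: "i \<in> {i. i < length (xs @ ys) \<and> (xs @ ys) ! i = Serv s}"
    show "i \<le> length xs + lastpos ys s"
    proof (cases "i < length xs")
      case False
      then have "i - length xs \<in> ?J" using i by (auto simp: nth_append)
      then have "i - length xs \<le> lastpos ys s" unfolding lastpos_def by (rule Max_ge[OF fin])
      then show ?thesis by simp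
    qed simp
  next
    show "length xs + lastpos ys s \<in> {i. i < length (xs @ ys) \<and> (xs @ ys) ! i = Serv s}"
      using jin by (auto simp: nth_append)
  qed
qed

lemma lastpos_head:
  assumes "Serv s \<notin> set xs"
  shows "lastpos (Serv s # xs) s = 0"
  unfolding lastpos_def
proof (rule Max_eqI)
  fix i assume "i \<in> {i. i < length (Serv s # xs) \<and> (Serv s # xs) ! i = Serv s}"
  then show "i \<le> 0" using assms by (cases i) (auto simp: in_set_conv_nth)
qed auto

lemma parse:
  assumes "distinct S" "length ws = length S - 1" "S \<noteq> []"
    and "\<forall>l<length ws. \<forall>s. Serv s \<in> set (ws ! l) \<longrightarrow> s \<in> set (drop (Suc l) S)"
  shows "set (serv_types (assemble S ws)) = set S \<and> Sseq (assemble S ws) = S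
         \<and> lastpos (assemble S ws) (hd S) = 0 \<and> segs (assemble S ws) = ws
         \<and> zweight \<alpha> \<beta> (assemble S ws) = prod_list (map \<beta> S) * prod_list (map (zweight \<alpha> \<beta>) ws)"
  using assms
proof (induction ws arbitrary: S)
  case Nil
  then obtain s where S: "S = [s]" by (cases S) auto
  show ?case using lastpos_head[of s "[]"] by (simp add: S Sseq_def segs_def zweight_def letter_weight_def)
next
  case (Cons w ws)
  then obtain s0 s1 S'' where S: "S = s0 # s1 # S''"
    by (cases S; cases "tl S") auto
  let ?z' = "assemble (s1 # S'') ws"
  have IH: "set (serv_types ?z') = set (s1 # S'') \<and> Sseq ?z' = s1 # S''
         \<and> lastpos ?z' s1 = 0 \<and> segs ?z' = ws
         \<and> zweight \<alpha> \<beta> ?z' = prod_list (map \<beta> (s1 # S'')) * prod_list (map (zweight \<alpha> \<beta>) ws)"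
  proof -
    have "\<forall>l<length ws. \<forall>s. Serv s \<in> set (ws ! l) \<longrightarrow> s \<in> set (drop (Suc l) (s1 # S''))"
    proof (intro allI impI)
      fix l s assume "l < length ws" "Serv s \<in> set (ws ! l)"
      then show "s \<in> set (drop (Suc l) (s1 # S''))"
        using Cons.prems(4) S by (metis Suc_less_eq drop_Suc_Cons length_Cons nth_Cons_Suc)
    qed
    then show ?thesis using Cons.IH[of "s1 # S''"] Cons.prems S by simp
  qed
  have w_serv: "Serv s \<in> set w \<Longrightarrow> s \<in> set (s1 # S'')" for s
    using Cons.prems(4) S by fastforce
  have s0_notin: "s0 \<notin> set (s1 # S'')" using Cons.prems(1) S by simp
  have z: "assemble S (w # ws) = (Serv s0 # w) @ ?z'" by (simp add: S assemble_cons2)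
  have stw: "set (serv_types w) \<subseteq> set (s1 # S'')" using w_serv unfolding set_serv_types subset_iff by (metis set_serv_types)
  have st: "set (serv_types (assemble S (w # ws))) = set S"
    unfolding z using IH stw by (auto simp: S)
  have s0w: "Serv s0 \<notin> set w" using w_serv s0_notin by blast
  have s0z: "Serv s0 \<notin> set ?z'" using IH s0_notin by (metis set_serv_types)
  have s0nz: "Serv s0 \<notin> set (w @ ?z')" using s0w s0z by simp
  have sseq: "Sseq (assemble S (w # ws)) = S"
  proof -
    have "set (serv_types w) \<subseteq> set (serv_types ?z')" using IH stw by simp
    then have "remdups (serv_types w @ serv_types ?z') = remdups (serv_types ?z')"
      by (rule remdups_append)
    moreover have "s0 \<notin> set (serv_types w @ serv_types ?z')"
      using s0nz by (simp add: set_serv_types)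
    ultimately show ?thesis using IH unfolding z by (simp add: S Sseq_def)
  qed
  have lp0: "lastpos (assemble S (w # ws)) s0 = 0"
    using lastpos_head[OF s0nz] by (simp add: z)
  have lpt: "lastpos (assemble S (w # ws)) t = Suc (length w) + lastpos ?z' t"
    if "t \<in> set (s1 # S'')" for t
  proof -
    have "Serv t \<in> set ?z'" using IH that by (simp add: set_serv_types[symmetric])
    then show ?thesis unfolding z using lastpos_append[of t ?z' "Serv s0 # w"] by simp
  qed
  have dropz: "drop (Suc (length w)) (assemble S (w # ws)) = ?z'" by (simp add: z)
  have S0: "S ! 0 = s0" "S ! Suc 0 = s1" "\<And>l. S ! Suc l = (s1 # S'') ! l" by (simp_all add: S)
  have seg0: "seg (assemble S (w # ws)) 0 = w"
  proof -
    have lp1: "lastpos (assemble S (w # ws)) s1 = Suc (length w)" using lpt[of s1] IH by simp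
    show ?thesis unfolding seg_def Let_def unfolding sseq S0(1,2) unfolding lp0 lp1 unfolding z by simp
  qed
  have segS: "seg (assemble S (w # ws)) (Suc l) = seg ?z' l" if "l < length ws" for l
  proof -
    have l1: "Suc l < length (s1 # S'')" using that Cons.prems(2) S by simp
    have in1: "(s1 # S'') ! l \<in> set (s1 # S'')" using l1 by (intro nth_mem) simp
    have in2: "(s1 # S'') ! Suc l \<in> set (s1 # S'')" using l1 by (intro nth_mem)
    have "drop (Suc (Suc (length w) + lastpos ?z' ((s1 # S'') ! l))) (assemble S (w # ws))
          = drop (Suc (lastpos ?z' ((s1 # S'') ! l))) ?z'"
      using dropz by (metis add_Suc_right drop_drop add.commute)
    then show ?thesis
      unfolding seg_def Let_def unfolding sseq S0(3) unfolding lpt[OF in1] lpt[OF in2]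
      using IH by simp
  qed
  have segs: "segs (assemble S (w # ws)) = w # ws"
  proof -
    have len: "length (Sseq (assemble S (w # ws))) - 1 = Suc (length ws)"
      using sseq Cons.prems(2) S by simp
    have "segs (assemble S (w # ws)) = map (seg (assemble S (w # ws))) [0..<Suc (length ws)]"
      unfolding segs_def len ..
    also have "\<dots> = seg (assemble S (w # ws)) 0 # map (seg (assemble S (w # ws)) \<circ> Suc) [0..<length ws]"
      by (simp add: upt_conv_Cons map_Suc_upt[symmetric] del: upt_Suc)
    also have "map (seg (assemble S (w # ws)) \<circ> Suc) [0..<length ws] = map (seg ?z') [0..<length ws]"
      by (rule map_cong) (auto simp: segS)
    also have "\<dots> = ws" using IH Cons.prems S
      by (metis segs_def length_Cons diff_Suc_1)
    finally show ?thesis using seg0 by simp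
  qed
  have zw: "zweight \<alpha> \<beta> (assemble S (w # ws)) = prod_list (map \<beta> S) * prod_list (map (zweight \<alpha> \<beta>) (w # ws))"
    using IH unfolding z by (simp add: S zweight_def letter_weight_def)
  show ?case using st sseq lp0 segs zw by (simp add: S)
qed



definition Lt :: "'c set \<Rightarrow> 's set \<Rightarrow> ('c, 's) letter set" where
  "Lt Ua Sb = Cust ` Ua \<union> Serv ` Sb"

lemma zweight_simps[simp]: "zweight \<alpha> \<beta> [] = 1" "zweight \<alpha> \<beta> (x # w) = letter_weight \<alpha> \<beta> x * zweight \<alpha> \<beta> w"
  by (simp_all add: zweight_def)

lemma sum_listall2:
  assumes "\<forall>L\<in>set Ls. finite L"
  shows "finite {w. list_all2 (\<lambda>x L. x \<in> L) w Ls} \<and>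
         sum (zweight \<alpha> \<beta>) {w. list_all2 (\<lambda>x L. x \<in> L) w Ls} = prod_list (map (sum (letter_weight \<alpha> \<beta>)) Ls)"
  using assms
proof (induction Ls)
  case Nil
  have "{w. list_all2 (\<lambda>x L. x \<in> L) w []} = {[]}" by auto
  then show ?case by simp
next
  case (Cons L Ls)
  let ?R = "{w. list_all2 (\<lambda>x L. x \<in> L) w Ls}"
  have eq: "{w. list_all2 (\<lambda>x L. x \<in> L) w (L # Ls)} = (\<lambda>(x, w). x # w) ` (L \<times> ?R)"
    by (auto simp: list_all2_Cons2)
  have inj: "inj_on (\<lambda>(x, w). x # w) (L \<times> ?R)" by (auto simp: inj_on_def)
  have fL: "finite L" using Cons.prems by simp
  have IH: "finite ?R" "sum (zweight \<alpha> \<beta>) ?R = prod_list (map (sum (letter_weight \<alpha> \<beta>)) Ls)"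
    using Cons by auto
  have "sum (zweight \<alpha> \<beta>) ((\<lambda>(x, w). x # w) ` (L \<times> ?R)) = sum (zweight \<alpha> \<beta> \<circ> (\<lambda>(x, w). x # w)) (L \<times> ?R)"
    by (rule sum.reindex[OF inj])
  also have "\<dots> = (\<Sum>x\<in>L. \<Sum>w\<in>?R. letter_weight \<alpha> \<beta> x * zweight \<alpha> \<beta> w)"
    by (simp add: sum.cartesian_product case_prod_unfold)
  also have "\<dots> = sum (letter_weight \<alpha> \<beta>) L * sum (zweight \<alpha> \<beta>) ?R"
    by (simp add: sum_product)
  finally show ?case using eq IH fL by simp
qed

lemma sum_lw_Cust: "sum (letter_weight \<alpha> \<beta>) (Cust ` U) = sum \<alpha> U"
  by (subst sum.reindex) (auto simp: inj_on_def letter_weight_def)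
lemma sum_lw_Serv: "sum (letter_weight \<alpha> \<beta>) (Serv ` U) = sum \<beta> U"
  by (subst sum.reindex) (auto simp: inj_on_def letter_weight_def)

lemma sum_lw_Lt: "finite Ua \<Longrightarrow> finite Sb \<Longrightarrow> sum (letter_weight \<alpha> \<beta>) (Lt Ua Sb) = sum \<alpha> Ua + sum \<beta> Sb"
  unfolding Lt_def by (subst sum.union_disjoint) (auto simp: sum_lw_Cust sum_lw_Serv)

definition sel :: "'c set \<Rightarrow> 's set \<Rightarrow> bool \<Rightarrow> ('c, 's) letter set" where
  "sel Ua Sb b = (if b then Serv ` Sb else Cust ` Ua)"

lemma listall2_sel: "list_all2 (\<lambda>x L. x \<in> L) w (map (sel Ua Sb) bs) \<longleftrightarrow> set w \<subseteq> Lt Ua Sb \<and> binw w = bs"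
proof (induction bs arbitrary: w)
  case Nil then show ?case by (auto simp: binw_def)
next
  case (Cons b bs)
  show ?case
  proof (cases w)
    case Nil then show ?thesis by (simp add: binw_def)
  next
    case (Cons x w')
    have "x \<in> sel Ua Sb b \<longleftrightarrow> x \<in> Lt Ua Sb \<and> is_serv x = b"
      by (cases x; cases b) (auto simp: sel_def Lt_def is_serv_def)
    then show ?thesis using Cons.IH[of w'] by (auto simp: Cons binw_def)
  qed
qed

lemma listall2_rep: "list_all2 (\<lambda>x L. x \<in> L) w (replicate r L) \<longleftrightarrow> set w \<subseteq> L \<and> length w = r"
proof (induction r arbitrary: w)
  case 0 then show ?case by auto
next
  case (Suc r) then show ?case by (cases w) auto
qed

lemma n0_n1_simps[simp]:
  "n0 [] = 0" "n1 [] = 0" "n0 (True # bs) = n0 bs" "n1 (True # bs) = Suc (n1 bs)"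
  "n0 (False # bs) = Suc (n0 bs)" "n1 (False # bs) = n1 bs"
  by (simp_all add: n0_def n1_def)

lemma n0_n1_len: "n0 bs + n1 bs = length bs"
  by (induction bs) (auto simp: n0_def n1_def)

lemma seg_bin:
  fixes Ua :: "'c set" and Sb :: "'s set"
  assumes "finite Ua" "finite Sb"
  shows "finite {w. set w \<subseteq> Lt Ua Sb \<and> binw w = bs} \<and>
    sum (zweight \<alpha> \<beta>) {w. set w \<subseteq> Lt Ua Sb \<and> binw w = bs} = sum \<alpha> Ua ^ n0 bs * sum \<beta> Sb ^ n1 bs"
proof -
  have eq: "{w. set w \<subseteq> Lt Ua Sb \<and> binw w = bs} = {w. list_all2 (\<lambda>x L. x \<in> L) w (map (sel Ua Sb) bs)}"
    by (simp add: listall2_sel)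
  have fin: "\<forall>L\<in>set (map (sel Ua Sb) bs). finite L" using assms by (auto simp: sel_def)
  have pr: "prod_list (map (sum (letter_weight \<alpha> \<beta>)) (map (sel Ua Sb) bs)) = sum \<alpha> Ua ^ n0 bs * sum \<beta> Sb ^ n1 bs"
  proof (induction bs)
    case (Cons b bs) then show ?case by (cases b) (auto simp: sel_def sum_lw_Cust sum_lw_Serv)
  qed simp
  show ?thesis unfolding eq using sum_listall2[OF fin, of \<alpha> \<beta>] pr by simp
qed

lemma seg_len:
  fixes Ua :: "'c set" and Sb :: "'s set"
  assumes "finite Ua" "finite Sb"
  shows "finite {w. set w \<subseteq> Lt Ua Sb \<and> length w = r} \<and>
    sum (zweight \<alpha> \<beta>) {w. set w \<subseteq> Lt Ua Sb \<and> length w = r} = (sum \<alpha> Ua + sum \<beta> Sb) ^ r"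
proof -
  have eq: "{w. set w \<subseteq> Lt Ua Sb \<and> length w = r} = {w. list_all2 (\<lambda>x L. x \<in> L) w (replicate r (Lt Ua Sb))}"
    by (simp add: listall2_rep)
  have fin: "\<forall>L\<in>set (replicate r (Lt Ua Sb)). finite L" using assms by (auto simp: Lt_def)
  show ?thesis unfolding eq using sum_listall2[OF fin, of \<alpha> \<beta>] sum_lw_Lt[OF assms]
    by (simp add: prod_list_replicate)
qed

lemma card_bool_lists: "card {bs::bool list. length bs = k \<and> n1 bs = m} = k choose m"
proof (induction k arbitrary: m)
  case 0
  have "{bs::bool list. length bs = 0 \<and> n1 bs = m} = (if m = 0 then {[]} else {})" by auto
  then show ?case by simp
next
  case (Suc k)
  let ?T = "\<lambda>m. {bs::bool list. length bs = k \<and> n1 bs = m}"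
  have fin0: "finite {bs::bool list. length bs = k}" using finite_lists_length_eq[of "UNIV::bool set" k] by simp
  have fin: "finite (?T m)" for m
    by (rule finite_subset[OF _ fin0]) auto
  have split: "{bs::bool list. length bs = Suc k \<and> n1 bs = m} =
      Cons True ` {bs. length bs = k \<and> Suc (n1 bs) = m} \<union> Cons False ` ?T m"
  proof (rule set_eqI)
    fix bs :: "bool list"
    show "bs \<in> {bs::bool list. length bs = Suc k \<and> n1 bs = m} \<longleftrightarrow>
      bs \<in> Cons True ` {bs. length bs = k \<and> Suc (n1 bs) = m} \<union> Cons False ` ?T m"
    proof (cases bs)
      case (Cons b bs')
      then show ?thesis by (cases b) (auto simp: image_iff)
    qed auto
  qed
  have fin1: "finite {bs::bool list. length bs = k \<and> Suc (n1 bs) = m}"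
    by (rule finite_subset[OF _ fin0]) auto
  have card: "card {bs::bool list. length bs = Suc k \<and> n1 bs = m} =
     card {bs::bool list. length bs = k \<and> Suc (n1 bs) = m} + card (?T m)"
    unfolding split by (subst card_Un_disjoint) (auto simp: fin fin1 card_image)
  show ?case
  proof (cases m)
    case 0
    then have "{bs::bool list. length bs = k \<and> Suc (n1 bs) = m} = {}" by auto
    then show ?thesis using card Suc.IH[of m] 0 by simp
  next
    case (Suc m')
    then have "{bs::bool list. length bs = k \<and> Suc (n1 bs) = m} = ?T m'" by auto
    then show ?thesis using card Suc.IH[of m] Suc.IH[of m'] Suc by simp
  qed
qed

lemma seg_nm:
  fixes Ua :: "'c set" and Sb :: "'s set"
  assumes "finite Ua" "finite Sb"
  shows "finite {w. set w \<subseteq> Lt Ua Sb \<and> n0 (binw w) = n \<and> n1 (binw w) = m} \<and>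
    sum (zweight \<alpha> \<beta>) {w. set w \<subseteq> Lt Ua Sb \<and> n0 (binw w) = n \<and> n1 (binw w) = m}
      = real ((n + m) choose n) * sum \<alpha> Ua ^ n * sum \<beta> Sb ^ m"
proof -
  let ?A = "{w. set w \<subseteq> Lt Ua Sb \<and> n0 (binw w) = n \<and> n1 (binw w) = m}"
  let ?T = "{bs::bool list. length bs = n + m \<and> n1 bs = m}"
  have finLt: "finite (Lt Ua Sb)" using assms by (simp add: Lt_def)
  have lenw: "length (binw w) = length w" for w :: "('c, 's) letter list" by (simp add: binw_def)
  have "?A \<subseteq> {w. set w \<subseteq> Lt Ua Sb \<and> length w = n + m}"
    using n0_n1_len lenw by (metis (mono_tags, lifting) Collect_mono)
  then have finA: "finite ?A"
    by (rule finite_subset) (simp add: finite_lists_length_eq finLt)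
  have fin0: "finite {bs::bool list. length bs = n + m}" using finite_lists_length_eq[of "UNIV::bool set" "n+m"] by simp
  have finT: "finite ?T"
    by (rule finite_subset[OF _ fin0]) auto
  have sub: "binw ` ?A \<subseteq> ?T" by (auto simp: n0_n1_len[symmetric])
  have "sum (zweight \<alpha> \<beta>) ?A = (\<Sum>bs\<in>?T. sum (zweight \<alpha> \<beta>) {w. w \<in> ?A \<and> binw w = bs})"
    by (rule sum.group[OF finA finT sub, symmetric])
  also have "\<dots> = (\<Sum>bs\<in>?T. sum \<alpha> Ua ^ n * sum \<beta> Sb ^ m)"
  proof (rule sum.cong)
    fix bs assume bs: "bs \<in> ?T"
    then have n0bs: "n0 bs = n" using n0_n1_len[of bs] by simp
    have "{w. w \<in> ?A \<and> binw w = bs} = {w. set w \<subseteq> Lt Ua Sb \<and> binw w = bs}"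
      using bs n0bs by auto
    then show "sum (zweight \<alpha> \<beta>) {w. w \<in> ?A \<and> binw w = bs} = sum \<alpha> Ua ^ n * sum \<beta> Sb ^ m"
      using seg_bin[OF assms, of bs \<alpha> \<beta>] bs n0bs by simp
  qed simp
  also have "\<dots> = real ((n + m) choose m) * (sum \<alpha> Ua ^ n * sum \<beta> Sb ^ m)"
    by (simp add: card_bool_lists)
  finally show ?thesis using finA by (simp add: binomial_symmetric[of m "n+m"] mult.assoc)
qed



lemma has_sum_partition_nat:
  fixes f :: "'a \<Rightarrow> real" and h :: "'a \<Rightarrow> nat"
  assumes nn: "\<And>x. x \<in> A \<Longrightarrow> f x \<ge> 0"
    and fib: "\<And>k. (f has_sum s k) {x \<in> A. h x = k}"
    and tot: "(s has_sum t) UNIV"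
  shows "(f has_sum t) A"
proof -
  have snn: "s k \<ge> 0" for k using has_sum_nonneg[OF fib] nn by auto
  have bdd: "sum f F \<le> t" if F: "finite F" "F \<subseteq> A" for F
  proof -
    have "sum f F = (\<Sum>k\<in>h ` F. sum f {x. x \<in> F \<and> h x = k})"
      by (rule sum.group[symmetric]) (use F in auto)
    also have "\<dots> \<le> (\<Sum>k\<in>h ` F. s k)"
    proof (rule sum_mono)
      fix k assume "k \<in> h ` F"
      show "sum f {x. x \<in> F \<and> h x = k} \<le> s k"
        by (rule finite_sum_le_has_sum[OF fib]) (use F nn in auto)
    qed
    also have "\<dots> \<le> t"
      by (rule finite_sum_le_has_sum[OF tot]) (use F snn in auto)
    finally show ?thesis .
  qed
  have summ: "f summable_on A"
  proof (rule nonneg_bdd_above_summable_on)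
    show "0 \<le> f x" if "x \<in> A" for x using nn that .
    show "bdd_above (sum f ` {F. F \<subseteq> A \<and> finite F})"
    proof (rule bdd_aboveI[of _ t])
      fix y assume "y \<in> sum f ` {F. F \<subseteq> A \<and> finite F}"
      then obtain F where "F \<subseteq> A" "finite F" "y = sum f F" by blast
      then show "y \<le> t" using bdd by blast
    qed
  qed
  define g where "g x = (h x, x)" for x
  have inj: "inj_on g A" by (auto simp: g_def inj_on_def)
  have img: "g ` A = Sigma UNIV (\<lambda>k. {x \<in> A. h x = k})" by (auto simp: g_def image_iff)
  have comp: "(\<lambda>(k, x). f x) \<circ> g = f" by (auto simp: g_def fun_eq_iff)
  have "(\<lambda>(k, x). f x) summable_on (g ` A)"
    using summable_on_reindex[OF inj, of "\<lambda>(k, x). f x"] summ comp by simp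
  then have "(\<lambda>(k, x). f x) summable_on Sigma UNIV (\<lambda>k. {x \<in> A. h x = k})" by (simp add: img)
  moreover have fibs: "((\<lambda>y. (\<lambda>(k, x). f x) (k, y)) has_sum s k) {x \<in> A. h x = k}" if "k \<in> UNIV" for k
    using fib[of k] by simp
  ultimately have "((\<lambda>(k, x). f x) has_sum t) (Sigma UNIV (\<lambda>k. {x \<in> A. h x = k}))"
    using has_sum_SigmaI[OF fibs tot] by blast
  then have "((\<lambda>(k, x). f x) has_sum t) (g ` A)" by (simp add: img)
  then show ?thesis using has_sum_reindex[OF inj, of "\<lambda>(k, x). f x"] comp by simp
qed

lemma negbin_has_sum:
  fixes x :: real
  assumes "0 \<le> x" "x < 1"
  shows "((\<lambda>m. real ((n + m) choose n) * x ^ m) has_sum (1 / (1 - x) ^ Suc n)) UNIV"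
proof -
  have "\<bar>- x\<bar> < 1" using assms by simp
  from gen_binomial_real[OF this, of "- (real n + 1)"]
  have s: "(\<lambda>m. (- (real n + 1) gchoose m) * (- x) ^ m) sums (1 + - x) powr (- (real n + 1))" .
  have eq: "(- (real n + 1) gchoose m) * (- x) ^ m = real ((n + m) choose n) * x ^ m" for m
  proof -
    have g1: "(- (real n + 1) gchoose m) = (-1) ^ m * ((real n + 1 + real m - 1) gchoose m)"
      by (rule gbinomial_minus)
    have g2: "(real n + 1 + real m - 1) = real (n + m)" by simp
    have g3: "real (n + m) gchoose m = real ((n + m) choose m)" by (rule binomial_gbinomial[symmetric])
    have g4: "(n + m) choose m = (n + m) choose n"
      using binomial_symmetric[of m "n + m"] by simp
    have "(- (real n + 1) gchoose m) = (-1) ^ m * real ((n + m) choose n)"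
      unfolding g1 g2 g3 g4 ..
    moreover have "(- x) ^ m = (-1) ^ m * x ^ m" by (rule power_minus)
    moreover have "(-1::real) ^ m * (-1) ^ m = 1"
    proof -
      have "(-1::real) ^ m * (-1) ^ m = (-1) ^ (2 * m)" by (simp only: power_add[symmetric] mult_2)
      then show ?thesis by (simp only: power_minus1_even)
    qed
    ultimately show ?thesis by (metis (no_types, lifting) mult.assoc mult.left_commute mult_1)
  qed
  have val: "(1 + - x) powr (- (real n + 1)) = 1 / (1 - x) ^ Suc n"
  proof -
    have p: "0 < 1 - x" using assms by simp
    have "(1 + - x) powr (- (real n + 1)) = 1 / (1 - x) powr (real n + 1)"
      by (simp only: powr_minus_divide diff_conv_add_uminus)
    also have "(1 - x) powr (real n + 1) = (1 - x) powr (real (Suc n))" by (simp add: add.commute)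
    also have "\<dots> = (1 - x) ^ Suc n" by (rule powr_realpow[OF p])
    finally show ?thesis .
  qed
  have fe: "(\<lambda>m. real ((n + m) choose n) * x ^ m) = (\<lambda>m. (- (real n + 1) gchoose m) * (- x) ^ m)"
    by (rule ext, rule eq[symmetric])
  have s2: "(\<lambda>m. real ((n + m) choose n) * x ^ m) sums (1 / (1 - x) ^ Suc n)"
    unfolding fe val[symmetric] by (rule s)
  show ?thesis
    by (rule sums_nonneg_imp_has_sum[OF s2]) (use assms in simp)
qed

lemma geom_has_sum:
  fixes x :: real
  assumes "0 \<le> x" "x < 1"
  shows "((\<lambda>r. x ^ r) has_sum (1 / (1 - x))) UNIV"
  by (rule sums_nonneg_imp_has_sum) (use geometric_sums[of x] assms in auto)

lemma zweight_nonneg: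
  assumes "\<forall>c. \<alpha> c > 0" "\<forall>s. \<beta> s > 0"
  shows "zweight \<alpha> \<beta> w \<ge> 0"
  unfolding zweight_def using assms
  by (intro prod_list_nonneg) (auto simp: letter_weight_def split: letter.splits intro: less_imp_le)

lemma finite_has_sum: "finite A \<Longrightarrow> sum f A = v \<Longrightarrow> (f has_sum v) A"
  using has_sum_finite by blast

lemma seg_X:
  fixes Ua :: "'c set" and Sb :: "'s set"
  assumes "finite Ua" "finite Sb" "\<forall>c. \<alpha> c > 0" "\<forall>s. \<beta> s > 0" "sum \<beta> Sb < 1"
  shows "(zweight \<alpha> \<beta> has_sum (sum \<alpha> Ua ^ n / (1 - sum \<beta> Sb) ^ Suc n))
           {w. set w \<subseteq> Lt Ua Sb \<and> n0 (binw w) = n}"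
proof (rule has_sum_partition_nat[where h = "\<lambda>w. n1 (binw w)"])
  show "0 \<le> zweight \<alpha> \<beta> x" for x using zweight_nonneg assms by blast
  fix m
  have "{x \<in> {w. set w \<subseteq> Lt Ua Sb \<and> n0 (binw w) = n}. n1 (binw x) = m}
        = {w. set w \<subseteq> Lt Ua Sb \<and> n0 (binw w) = n \<and> n1 (binw w) = m}" by auto
  then show "(zweight \<alpha> \<beta> has_sum (real ((n + m) choose n) * sum \<alpha> Ua ^ n * sum \<beta> Sb ^ m))
        {x \<in> {w. set w \<subseteq> Lt Ua Sb \<and> n0 (binw w) = n}. n1 (binw x) = m}"
    using seg_nm[OF assms(1,2), of n m \<alpha> \<beta>] by (auto intro: finite_has_sum)
next
  have b0: "sum \<beta> Sb \<ge> 0" using assms by (auto intro: sum_nonneg less_imp_le)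
  have "((\<lambda>m. sum \<alpha> Ua ^ n * (real ((n + m) choose n) * sum \<beta> Sb ^ m)) has_sum
          (sum \<alpha> Ua ^ n * (1 / (1 - sum \<beta> Sb) ^ Suc n))) UNIV"
    by (rule has_sum_cmult_right[OF negbin_has_sum]) (use b0 assms in auto)
  then show "((\<lambda>m. real ((n + m) choose n) * sum \<alpha> Ua ^ n * sum \<beta> Sb ^ m) has_sum
          (sum \<alpha> Ua ^ n / (1 - sum \<beta> Sb) ^ Suc n)) UNIV"
    by (simp add: mult_ac)
qed

lemma seg_Y:
  fixes Ua :: "'c set" and Sb :: "'s set"
  assumes "finite Ua" "finite Sb" "\<forall>c. \<alpha> c > 0" "\<forall>s. \<beta> s > 0" "sum \<alpha> Ua < 1"
  shows "(zweight \<alpha> \<beta> has_sum (sum \<beta> Sb ^ m / (1 - sum \<alpha> Ua) ^ Suc m))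
           {w. set w \<subseteq> Lt Ua Sb \<and> n1 (binw w) = m}"
proof (rule has_sum_partition_nat[where h = "\<lambda>w. n0 (binw w)"])
  show "0 \<le> zweight \<alpha> \<beta> x" for x using zweight_nonneg assms by blast
  fix n
  have seteq: "{x \<in> {w. set w \<subseteq> Lt Ua Sb \<and> n1 (binw w) = m}. n0 (binw x) = n}
        = {w. set w \<subseteq> Lt Ua Sb \<and> n0 (binw w) = n \<and> n1 (binw w) = m}" by auto
  then show "(zweight \<alpha> \<beta> has_sum (real ((m + n) choose m) * sum \<alpha> Ua ^ n * sum \<beta> Sb ^ m))
        {x \<in> {w. set w \<subseteq> Lt Ua Sb \<and> n1 (binw w) = m}. n0 (binw x) = n}"
  proof -
    have c: "(m + n) choose m = (n + m) choose n"
      using binomial_symmetric[of n "m+n"] by (simp add: add.commute)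
    show ?thesis using seg_nm[OF assms(1,2), of n m \<alpha> \<beta>] seteq unfolding c
      by (auto intro: finite_has_sum)
  qed
next
  have a0: "sum \<alpha> Ua \<ge> 0" using assms by (auto intro: sum_nonneg less_imp_le)
  have "((\<lambda>n. sum \<beta> Sb ^ m * (real ((m + n) choose m) * sum \<alpha> Ua ^ n)) has_sum
          (sum \<beta> Sb ^ m * (1 / (1 - sum \<alpha> Ua) ^ Suc m))) UNIV"
    by (rule has_sum_cmult_right[OF negbin_has_sum]) (use a0 assms in auto)
  then show "((\<lambda>n. real ((m + n) choose m) * sum \<alpha> Ua ^ n * sum \<beta> Sb ^ m) has_sum
          (sum \<beta> Sb ^ m / (1 - sum \<alpha> Ua) ^ Suc m)) UNIV"
    by (simp add: mult_ac)
qed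

lemma seg_R:
  fixes Ua :: "'c set" and Sb :: "'s set"
  assumes "finite Ua" "finite Sb" "\<forall>c. \<alpha> c > 0" "\<forall>s. \<beta> s > 0" "sum \<alpha> Ua + sum \<beta> Sb < 1"
  shows "(zweight \<alpha> \<beta> has_sum (1 / (1 - (sum \<alpha> Ua + sum \<beta> Sb)))) {w. set w \<subseteq> Lt Ua Sb}"
proof (rule has_sum_partition_nat[where h = "length"])
  show "0 \<le> zweight \<alpha> \<beta> x" for x using zweight_nonneg assms by blast
  fix r
  have "{x \<in> {w. set w \<subseteq> Lt Ua Sb}. length x = r} = {w. set w \<subseteq> Lt Ua Sb \<and> length w = r}" by auto
  then show "(zweight \<alpha> \<beta> has_sum ((sum \<alpha> Ua + sum \<beta> Sb) ^ r)) {x \<in> {w. set w \<subseteq> Lt Ua Sb}. length x = r}"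
    using seg_len[OF assms(1,2), of r \<alpha> \<beta>] by (auto intro: finite_has_sum)
next
  have ab0: "sum \<alpha> Ua + sum \<beta> Sb \<ge> 0" by (intro add_nonneg_nonneg sum_nonneg) (use assms in \<open>auto intro: less_imp_le\<close>)
  show "((\<lambda>r. (sum \<alpha> Ua + sum \<beta> Sb) ^ r) has_sum (1 / (1 - (sum \<alpha> Ua + sum \<beta> Sb)))) UNIV"
    using geom_has_sum[OF ab0 assms(5)] .
qed



lemma adm_serv: "admissible_seg E S l w \<Longrightarrow> Serv s \<in> set w \<Longrightarrow> s \<in> set (drop (Suc l) S)"
  unfolding admissible_seg_def by fastforce

lemma adm_Lt: "admissible_seg E S l w \<longleftrightarrow> set w \<subseteq> Lt (Uset E (set (take (Suc l) S))) (set (drop (Suc l) S))"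
  unfolding admissible_seg_def Lt_def
proof
  assume H: "\<forall>x\<in>set w. case x of Cust c \<Rightarrow> c \<in> Uset E (set (take (Suc l) S)) | Serv s \<Rightarrow> s \<in> set (drop (Suc l) S)"
  show "set w \<subseteq> Cust ` Uset E (set (take (Suc l) S)) \<union> Serv ` set (drop (Suc l) S)"
  proof
    fix x assume "x \<in> set w"
    then have "case x of Cust c \<Rightarrow> c \<in> Uset E (set (take (Suc l) S)) | Serv s \<Rightarrow> s \<in> set (drop (Suc l) S)"
      using H by blast
    then show "x \<in> Cust ` Uset E (set (take (Suc l) S)) \<union> Serv ` set (drop (Suc l) S)"
      by (cases x) auto
  qed
next
  assume H: "set w \<subseteq> Cust ` Uset E (set (take (Suc l) S)) \<union> Serv ` set (drop (Suc l) S)"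
  show "\<forall>x\<in>set w. case x of Cust c \<Rightarrow> c \<in> Uset E (set (take (Suc l) S)) | Serv s \<Rightarrow> s \<in> set (drop (Suc l) S)"
  proof
    fix x assume "x \<in> set w"
    then have "x \<in> Cust ` Uset E (set (take (Suc l) S)) \<union> Serv ` set (drop (Suc l) S)" using H by blast
    then show "case x of Cust c \<Rightarrow> c \<in> Uset E (set (take (Suc l) S)) | Serv s \<Rightarrow> s \<in> set (drop (Suc l) S)"
      by (cases x) auto
  qed
qed

lemma Zspace_props:
  fixes E :: "'c \<Rightarrow> 's::finite \<Rightarrow> bool"
  assumes "z \<in> Zspace E"
  shows "distinct (Sseq z) \<and> set (Sseq z) = UNIV \<and> length (segs z) = CARD('s) - 1 \<and>
         (\<forall>l < CARD('s) - 1. admissible_seg E (Sseq z) l (segs z ! l)) \<and> z = assemble (Sseq z) (segs z)"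
proof -
  have "\<exists>S ws. z = assemble S ws \<and> distinct S \<and> set S = UNIV \<and> length ws = CARD('s) - 1
                 \<and> (\<forall>l < length ws. admissible_seg E S l (ws ! l))"
    using assms unfolding Zspace_def by (rule CollectD)
  then obtain S ws where z: "z = assemble S ws" and S: "distinct S" "set S = UNIV"
    and len: "length ws = CARD('s) - 1" and adm: "\<forall>l < length ws. admissible_seg E S l (ws ! l)"
    by blast
  have "card (set S) = length S" using S(1) by (rule distinct_card)
  then have lenS: "length S = CARD('s)" using S(2) by simp
  have ne: "S \<noteq> []" using S(2) by auto
  have srv: "\<forall>l<length ws. \<forall>s. Serv s \<in> set (ws ! l) \<longrightarrow> s \<in> set (drop (Suc l) S)"
  proof (intro allI impI)
    fix l s assume l: "l < length ws" and s: "Serv s \<in> set (ws ! l)"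
    show "s \<in> set (drop (Suc l) S)" using adm_serv[OF adm[rule_format, OF l] s] .
  qed
  have len2: "length ws = length S - 1" using len lenS by simp
  have P: "Sseq (assemble S ws) = S \<and> segs (assemble S ws) = ws"
    using parse[OF S(1) len2 ne srv] by blast
  then have "Sseq z = S" "segs z = ws" by (simp_all add: z)
  then show ?thesis using S len adm z by simp
qed

lemma pmf_summable: "pmf p summable_on A"
proof -
  have "Infinite_Sum.abs_summable_on (pmf p) A"
    by (rule abs_summable_equivalent[THEN iffD2, OF pmf_abs_summable])
  then show ?thesis by (rule summable_on_iff_abs_summable_on_real[THEN iffD2])
qed

lemma pmf_map_eval:
  assumes Z0: "\<forall>z. z \<notin> Z \<longrightarrow> pmf p z = 0" and XZ: "X \<subseteq> Z" and FX: "\<forall>z\<in>Z. F z = y \<longleftrightarrow> z \<in> X"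
    and hs: "(pmf p has_sum v) X"
  shows "pmf (map_pmf F p) y = v"
proof -
  have "(pmf p has_sum v) (F -` {y}) \<longleftrightarrow> (pmf p has_sum v) X"
  proof (rule has_sum_cong_neutral)
    fix x assume "x \<in> X - F -` {y}"
    then have False using XZ FX by blast
    then show "pmf p x = 0" ..
  next
    fix x assume x: "x \<in> F -` {y} - X"
    then have "x \<notin> Z" using FX by blast
    then show "pmf p x = 0" using Z0 by blast
  qed (rule refl)
  then have "(pmf p has_sum v) (F -` {y})" using hs by (rule iffD2)
  then have "infsum (pmf p) (F -` {y}) = v" by (rule infsumI)
  moreover have "pmf (map_pmf F p) y = infsum (pmf p) (F -` {y})"
    unfolding pmf_map measure_pmf_conv_infsetsum by (rule infsetsum_infsum[OF pmf_abs_summable])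
  ultimately show ?thesis by simp
qed

lemma main:
  fixes E :: "'c::finite \<Rightarrow> 's::finite \<Rightarrow> bool" and A :: "nat \<Rightarrow> ('c, 's) letter list set"
  assumes piZ: "\<forall>z. pmf p z = (if z \<in> Zspace E then B * zweight \<alpha> \<beta> z else 0)"
    and S: "distinct S" "set S = UNIV"
    and A: "\<forall>l<CARD('s) - 1. A l \<subseteq> {w. admissible_seg E S l w}"
    and hs: "\<forall>l<CARD('s) - 1. (zweight \<alpha> \<beta> has_sum sv l) (A l)"
    and Bpos: "B > 0" and bpos: "\<forall>s. \<beta> s > 0"
  shows "(pmf p has_sum (B * prod \<beta> UNIV * (\<Prod>l<CARD('s) - 1. sv l)))
           {z \<in> Zspace E. Sseq z = S \<and> (\<forall>l<CARD('s) - 1. segs z ! l \<in> A l)}"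
proof -
  define n where "n = CARD('s) - 1"
  have lenS: "length S = CARD('s)" using S distinct_card by fastforce
  have ne: "S \<noteq> []" using S by auto
  define asm where "asm f = assemble S (map f [0..<n])" for f :: "nat \<Rightarrow> ('c, 's) letter list" 
  let ?P = "PiE {..<n} A"
  let ?Z = "{z \<in> Zspace E. Sseq z = S \<and> (\<forall>l<n. segs z ! l \<in> A l)}"
  have par: "Sseq (asm f) = S \<and> segs (asm f) = map f [0..<n] \<and>
             zweight \<alpha> \<beta> (asm f) = prod_list (map \<beta> S) * prod_list (map (zweight \<alpha> \<beta>) (map f [0..<n]))"
    if f: "f \<in> ?P" for f
  proof -
    have "\<forall>l<length (map f [0..<n]). \<forall>s. Serv s \<in> set (map f [0..<n] ! l) \<longrightarrow> s \<in> set (drop (Suc l) S)"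
      using f A adm_serv unfolding n_def by fastforce
    from parse[OF S(1) _ ne this] show ?thesis using lenS by (simp add: asm_def n_def)
  qed
  have inj: "inj_on asm ?P"
  proof (rule inj_onI)
    fix f g assume f: "f \<in> ?P" and g: "g \<in> ?P" and eq: "asm f = asm g"
    then have "map f [0..<n] = map g [0..<n]" using par[OF f] par[OF g] by simp
    then show "f = g" by (intro PiE_ext[OF f g]) (auto simp: map_eq_conv)
  qed
  have img: "asm ` ?P = ?Z"
  proof (intro set_eqI iffI)
    fix z assume "z \<in> asm ` ?P"
    then obtain f where f: "f \<in> ?P" and z: "z = asm f" by blast
    have admf: "\<forall>l<length (map f [0..<n]). admissible_seg E S l (map f [0..<n] ! l)"
    proof (intro allI impI)
      fix l assume "l < length (map f [0..<n])"
      then have l: "l < n" by simp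
      then have "f l \<in> A l" using f by auto
      then show "admissible_seg E S l (map f [0..<n] ! l)" using A l by (auto simp: n_def)
    qed
    have "\<exists>S' ws. z = assemble S' ws \<and> distinct S' \<and> set S' = UNIV \<and> length ws = CARD('s) - 1
                 \<and> (\<forall>l < length ws. admissible_seg E S' l (ws ! l))"
      by (rule exI[of _ S], rule exI[of _ "map f [0..<n]"]) (use S admf in \<open>simp add: z asm_def n_def\<close>)
    then have "z \<in> Zspace E" unfolding Zspace_def by blast
    then show "z \<in> ?Z" using par[OF f] f z by auto
  next
    fix z assume z: "z \<in> ?Z"
    then have zp: "length (segs z) = n" "z = assemble S (segs z)"
      using Zspace_props[of z E] by (auto simp: n_def)
    define f where "f = restrict (\<lambda>l. segs z ! l) {..<n}"
    have f: "f \<in> ?P" using z by (auto simp: f_def)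
    have "map f [0..<n] = segs z" using zp by (intro nth_equalityI) (auto simp: f_def)
    then have "z = asm f" using zp by (simp add: asm_def)
    then show "z \<in> asm ` ?P" using f by blast
  qed
  have val: "pmf p (asm f) = B * prod \<beta> UNIV * (\<Prod>l<n. zweight \<alpha> \<beta> (f l))" if f: "f \<in> ?P" for f
  proof -
    have "asm f \<in> Zspace E" using f img by blast
    then have "pmf p (asm f) = B * zweight \<alpha> \<beta> (asm f)" using piZ by simp
    also have "prod_list (map \<beta> S) = prod \<beta> UNIV"
      using S prod.distinct_set_conv_list[of S \<beta>] by simp
    moreover have "prod_list (map (zweight \<alpha> \<beta>) (map f [0..<n])) = (\<Prod>l<n. zweight \<alpha> \<beta> (f l))"
      using prod.distinct_set_conv_list[of "[0..<n]" "\<lambda>l. zweight \<alpha> \<beta> (f l)"]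
      by (simp add: atLeast0LessThan o_def)
    ultimately show ?thesis using par[OF f] by simp
  qed
  have "pmf p summable_on ?Z" by (rule pmf_summable)
  then have "(pmf p \<circ> asm) summable_on ?P" using summable_on_reindex[OF inj, of "pmf p"] img by simp
  then have "(\<lambda>f. (B * prod \<beta> UNIV) * (\<Prod>l<n. zweight \<alpha> \<beta> (f l))) summable_on ?P"
    by (rule summable_on_cong[THEN iffD1, rotated]) (simp add: val)
  moreover have c0: "B * prod \<beta> UNIV \<noteq> 0" using Bpos bpos by (simp add: prod_pos less_imp_neq[symmetric])
  ultimately have summ: "(\<lambda>f. \<Prod>l\<in>{..<n}. zweight \<alpha> \<beta> (f l)) summable_on ?P"
    using summable_on_cmult_right' by blast
  have "infsum (\<lambda>f. \<Prod>l\<in>{..<n}. zweight \<alpha> \<beta> (f l)) ?P = (\<Prod>l\<in>{..<n}. infsum (zweight \<alpha> \<beta>) (A l))"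
    by (rule infsum_prod_PiE[OF _ _ summ]) (use hs in \<open>auto simp: n_def dest: has_sum_imp_summable\<close>)
  also have "\<dots> = (\<Prod>l<n. sv l)" using hs by (intro prod.cong) (auto simp: n_def intro: infsumI)
  finally have "((\<lambda>f. \<Prod>l\<in>{..<n}. zweight \<alpha> \<beta> (f l)) has_sum (\<Prod>l<n. sv l)) ?P"
    using has_sum_infsum[OF summ] by simp
  then have "((\<lambda>f. (B * prod \<beta> UNIV) * (\<Prod>l<n. zweight \<alpha> \<beta> (f l))) has_sum
              ((B * prod \<beta> UNIV) * (\<Prod>l<n. sv l))) ?P"
    by (rule has_sum_cmult_right)
  then have "((pmf p \<circ> asm) has_sum ((B * prod \<beta> UNIV) * (\<Prod>l<n. sv l))) ?P"
    by (rule has_sum_cong[THEN iffD1, rotated]) (simp add: val)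
  then have "(pmf p has_sum ((B * prod \<beta> UNIV) * (\<Prod>l<n. sv l))) ?Z"
    using has_sum_reindex[OF inj, of "pmf p"] img by simp
  then show ?thesis by (simp add: n_def)
qed



lemma seg_facts:
  fixes E :: "'c::finite \<Rightarrow> 's::finite \<Rightarrow> bool" and \<alpha> :: "'c \<Rightarrow> real" and \<beta> :: "'s \<Rightarrow> real"
  assumes S: "distinct S" "set S = UNIV" and l: "l < CARD('s) - 1"
    and alpha_pos: "\<forall>c. \<alpha> c > 0" and alpha_sum: "sum \<alpha> UNIV = 1"
    and beta_pos: "\<forall>s. \<beta> s > 0" and beta_sum: "sum \<beta> UNIV = 1"
    and crp: "complete_resource_pooling E \<alpha> \<beta>"
  shows "sum \<beta> (set (take (Suc l) S)) = 1 - sum \<beta> (set (drop (Suc l) S)) \<and>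
         sum \<alpha> (Uset E (set (take (Suc l) S))) = 1 - sum \<alpha> (Cset E (set (drop (Suc l) S))) \<and>
         sum \<beta> (set (drop (Suc l) S)) < 1 \<and> sum \<alpha> (Uset E (set (take (Suc l) S))) < 1 \<and>
         sum \<alpha> (Uset E (set (take (Suc l) S))) + sum \<beta> (set (drop (Suc l) S)) < 1"
proof -
  define T where "T = set (take (Suc l) S)"
  define D where "D = set (drop (Suc l) S)"
  have "card (set S) = length S" using S(1) by (rule distinct_card)
  then have lenS: "length S = CARD('s)" using S(2) by simp
  have un: "T \<union> D = UNIV" unfolding T_def D_def using S(2)
    by (metis append_take_drop_id set_append)
  have dj: "T \<inter> D = {}" unfolding T_def D_def by (rule set_take_disj_set_drop_if_distinct[OF S(1)]) simp
  have cD: "UNIV - T = D" using un dj by blast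
  have sb: "sum \<beta> T + sum \<beta> D = 1"
    using beta_sum sum.union_disjoint[of T D \<beta>] un dj by simp
  have ua: "Uset E T = UNIV - Cset E D" unfolding Uset_def cD ..
  have sa: "sum \<alpha> (Uset E T) = 1 - sum \<alpha> (Cset E D)"
    unfolding ua using alpha_sum by (simp add: sum_diff)
  have Sne: "S \<noteq> []" using S(2) by auto
  have Tne: "T \<noteq> {}" unfolding T_def using Sne by (cases S) auto
  have Dne: "D \<noteq> {}" unfolding D_def using l lenS by simp
  have TU: "T \<noteq> UNIV" using Dne dj by blast
  have cr: "sum \<beta> T > sum \<alpha> (Uset E T)"
    using crp Tne TU unfolding complete_resource_pooling_def by blast
  have bT: "sum \<beta> T > 0" using Tne beta_pos by (intro sum_pos) auto
  have bD: "sum \<beta> D \<ge> 0" using beta_pos by (intro sum_nonneg) (auto intro: less_imp_le)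
  show ?thesis
    using sb sa cr bT bD unfolding T_def[symmetric] D_def[symmetric] by linarith
qed

lemma case_gen:
  fixes E :: "'c::finite \<Rightarrow> 's::finite \<Rightarrow> bool" and g :: "('c, 's) letter list \<Rightarrow> 'b"
  assumes piZ: "\<forall>z. pmf p z = (if z \<in> Zspace E then B * zweight \<alpha> \<beta> z else 0)"
    and S: "distinct S" "set S = UNIV" and len: "length ts = CARD('s) - 1"
    and hs: "\<forall>l<CARD('s) - 1. (zweight \<alpha> \<beta> has_sum sv l) {w. admissible_seg E S l w \<and> g w = ts ! l}"
    and Bpos: "B > 0" and bpos: "\<forall>s. \<beta> s > 0"
  shows "pmf (map_pmf (\<lambda>z. (Sseq z, map g (segs z))) p) (S, ts) = B * prod \<beta> UNIV * (\<Prod>l<CARD('s) - 1. sv l)"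
proof (rule pmf_map_eval)
  let ?A = "\<lambda>l. {w. admissible_seg E S l w \<and> g w = ts ! l}"
  show "(pmf p has_sum (B * prod \<beta> UNIV * (\<Prod>l<CARD('s) - 1. sv l)))
           {z \<in> Zspace E. Sseq z = S \<and> (\<forall>l<CARD('s) - 1. segs z ! l \<in> ?A l)}"
    by (rule main[OF piZ S _ hs Bpos bpos]) auto
  show "\<forall>z. z \<notin> Zspace E \<longrightarrow> pmf p z = 0" using piZ by simp
  show "{z \<in> Zspace E. Sseq z = S \<and> (\<forall>l<CARD('s) - 1. segs z ! l \<in> ?A l)} \<subseteq> Zspace E" by blast
  show "\<forall>z\<in>Zspace E. ((Sseq z, map g (segs z)) = (S, ts)) =
      (z \<in> {z \<in> Zspace E. Sseq z = S \<and> (\<forall>l<CARD('s) - 1. segs z ! l \<in> ?A l)})"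
  proof
    fix z assume z: "z \<in> Zspace E"
    note P = Zspace_props[OF z]
    show "((Sseq z, map g (segs z)) = (S, ts)) =
      (z \<in> {z \<in> Zspace E. Sseq z = S \<and> (\<forall>l<CARD('s) - 1. segs z ! l \<in> ?A l)})"
    proof (cases "Sseq z = S")
      case True
      have "map g (segs z) = ts \<longleftrightarrow> (\<forall>l<CARD('s) - 1. g (segs z ! l) = ts ! l)"
        using P len by (simp add: list_eq_iff_nth_eq)
      then show ?thesis using True P z by auto
    qed simp
  qed
qed

lemma case_R:
  fixes E :: "'c::finite \<Rightarrow> 's::finite \<Rightarrow> bool"
  assumes piZ: "\<forall>z. pmf p z = (if z \<in> Zspace E then B * zweight \<alpha> \<beta> z else 0)"
    and S: "distinct S" "set S = UNIV"
    and hs: "\<forall>l<CARD('s) - 1. (zweight \<alpha> \<beta> has_sum sv l) {w. admissible_seg E S l w}"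
    and Bpos: "B > 0" and bpos: "\<forall>s. \<beta> s > 0"
  shows "pmf (map_pmf Sseq p) S = B * prod \<beta> UNIV * (\<Prod>l<CARD('s) - 1. sv l)"
proof (rule pmf_map_eval)
  let ?A = "\<lambda>l. {w. admissible_seg E S l w}"
  show "(pmf p has_sum (B * prod \<beta> UNIV * (\<Prod>l<CARD('s) - 1. sv l)))
           {z \<in> Zspace E. Sseq z = S \<and> (\<forall>l<CARD('s) - 1. segs z ! l \<in> ?A l)}"
    by (rule main[OF piZ S _ hs Bpos bpos]) auto
  show "\<forall>z. z \<notin> Zspace E \<longrightarrow> pmf p z = 0" using piZ by simp
  show "{z \<in> Zspace E. Sseq z = S \<and> (\<forall>l<CARD('s) - 1. segs z ! l \<in> ?A l)} \<subseteq> Zspace E" by blast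
  show "\<forall>z\<in>Zspace E. (Sseq z = S) =
      (z \<in> {z \<in> Zspace E. Sseq z = S \<and> (\<forall>l<CARD('s) - 1. segs z ! l \<in> ?A l)})"
    using Zspace_props by fastforce
qed



theorem theorem5p2:
  fixes E :: "'c::finite \<Rightarrow> 's::finite \<Rightarrow> bool"
    and \<alpha> :: "'c \<Rightarrow> real" and \<beta> :: "'s \<Rightarrow> real"
    and B :: real and p :: "('c, 's) letter list pmf"
  assumes conn: "bip_connected E"
    and alpha_pos: "\<forall>c. \<alpha> c > 0" and alpha_sum: "sum \<alpha> UNIV = 1"
    and beta_pos: "\<forall>s. \<beta> s > 0" and beta_sum: "sum \<beta> UNIV = 1"
    and crp: "complete_resource_pooling E \<alpha> \<beta>"
    and B_pos: "B > 0"
    and piZ: "\<forall>z. pmf p z = (if z \<in> Zspace E then B * zweight \<alpha> \<beta> z else 0)"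
  shows "\<forall>S. distinct S \<and> set S = UNIV \<longrightarrow>
    (\<forall>ws. length ws = CARD('s) - 1 \<longrightarrow>
       pmf (map_pmf W_of p) (S, ws) = B * prod \<beta> UNIV *
         (\<Prod>l<CARD('s) - 1. sum \<alpha> (Uset E (set (take (Suc l) S))) ^ n0 (ws ! l)
                            * sum \<beta> (set (drop (Suc l) S)) ^ n1 (ws ! l))) \<and>
    (\<forall>nm. length nm = CARD('s) - 1 \<longrightarrow>
       pmf (map_pmf U_of p) (S, nm) = B * prod \<beta> UNIV *
         (\<Prod>l<CARD('s) - 1. real ((fst (nm ! l) + snd (nm ! l)) choose fst (nm ! l))
                            * sum \<alpha> (Uset E (set (take (Suc l) S))) ^ fst (nm ! l)
                            * sum \<beta> (set (drop (Suc l) S)) ^ snd (nm ! l))) \<and>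
    (\<forall>ns. length ns = CARD('s) - 1 \<longrightarrow>
       pmf (map_pmf X_of p) (S, ns) = B * prod \<beta> UNIV *
         (\<Prod>l<CARD('s) - 1. sum \<alpha> (Uset E (set (take (Suc l) S))) ^ (ns ! l)
                            / sum \<beta> (set (take (Suc l) S)) ^ (ns ! l + 1))) \<and>
    (\<forall>ms. length ms = CARD('s) - 1 \<longrightarrow>
       pmf (map_pmf Y_of p) (S, ms) = B * prod \<beta> UNIV *
         (\<Prod>l<CARD('s) - 1. sum \<beta> (set (drop (Suc l) S)) ^ (ms ! l)
                            / sum \<alpha> (Cset E (set (drop (Suc l) S))) ^ (ms ! l + 1))) \<and>
    (\<forall>rs. length rs = CARD('s) - 1 \<longrightarrow>
       pmf (map_pmf V_of p) (S, rs) = B * prod \<beta> UNIV *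
         (\<Prod>l<CARD('s) - 1. (sum \<alpha> (Uset E (set (take (Suc l) S)))
                              + sum \<beta> (set (drop (Suc l) S))) ^ (rs ! l))) \<and>
    pmf (map_pmf R_of p) S = B * prod \<beta> UNIV *
         (\<Prod>l<CARD('s) - 1. 1 / (sum \<beta> (set (take (Suc l) S))
                                  - sum \<alpha> (Uset E (set (take (Suc l) S)))))"
proof (intro allI impI)
  fix S :: "'s list" assume "distinct S \<and> set S = UNIV"
  then have S: "distinct S" "set S = UNIV" by auto
  define Ua where "Ua l = Uset E (set (take (Suc l) S))" for l
  define D where "D l = set (drop (Suc l) S)" for l
  have F: "sum \<beta> (set (take (Suc l) S)) = 1 - sum \<beta> (D l) \<and>
         sum \<alpha> (Ua l) = 1 - sum \<alpha> (Cset E (D l)) \<and>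
         sum \<beta> (D l) < 1 \<and> sum \<alpha> (Ua l) < 1 \<and> sum \<alpha> (Ua l) + sum \<beta> (D l) < 1"
    if "l < CARD('s) - 1" for l
    using seg_facts[OF S that alpha_pos alpha_sum beta_pos beta_sum crp] unfolding Ua_def D_def .
  have admL: "admissible_seg E S l w \<longleftrightarrow> set w \<subseteq> Lt (Ua l) (D l)" for l w
    unfolding Ua_def D_def by (rule adm_Lt)
  have finU: "finite (Ua l)" for l by simp
  have finD: "finite (D l)" for l by simp
  have lenb: "length (binw w) = length w" for w :: "('c, 's) letter list" by (simp add: binw_def)
  have W: "pmf (map_pmf W_of p) (S, ws) = B * prod \<beta> UNIV *
         (\<Prod>l<CARD('s) - 1. sum \<alpha> (Ua l) ^ n0 (ws ! l) * sum \<beta> (D l) ^ n1 (ws ! l))"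
    if len: "length ws = CARD('s) - 1" for ws
  proof -
    have eqF: "W_of = (\<lambda>z. (Sseq z, map binw (segs z)))" by (rule ext) (simp add: W_of_def)
    have hs: "\<forall>l<CARD('s) - 1. (zweight \<alpha> \<beta> has_sum (sum \<alpha> (Ua l) ^ n0 (ws ! l) * sum \<beta> (D l) ^ n1 (ws ! l)))
                 {w. admissible_seg E S l w \<and> binw w = ws ! l}"
      using seg_bin[OF finU finD] unfolding admL by (auto intro: finite_has_sum)
    show ?thesis unfolding eqF by (rule case_gen[OF piZ S len hs B_pos beta_pos])
  qed
  have U: "pmf (map_pmf U_of p) (S, nm) = B * prod \<beta> UNIV *
         (\<Prod>l<CARD('s) - 1. real ((fst (nm ! l) + snd (nm ! l)) choose fst (nm ! l))
              * sum \<alpha> (Ua l) ^ fst (nm ! l) * sum \<beta> (D l) ^ snd (nm ! l))"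
    if len: "length nm = CARD('s) - 1" for nm
  proof -
    have eqF: "U_of = (\<lambda>z. (Sseq z, map (\<lambda>w. (n0 (binw w), n1 (binw w))) (segs z)))"
      by (rule ext) (simp add: U_of_def)
    have hs: "\<forall>l<CARD('s) - 1. (zweight \<alpha> \<beta> has_sum (real ((fst (nm ! l) + snd (nm ! l)) choose fst (nm ! l))
              * sum \<alpha> (Ua l) ^ fst (nm ! l) * sum \<beta> (D l) ^ snd (nm ! l)))
                 {w. admissible_seg E S l w \<and> (n0 (binw w), n1 (binw w)) = nm ! l}"
    proof (intro allI impI)
      fix l
      have "{w. admissible_seg E S l w \<and> (n0 (binw w), n1 (binw w)) = nm ! l} =
            {w. set w \<subseteq> Lt (Ua l) (D l) \<and> n0 (binw w) = fst (nm ! l) \<and> n1 (binw w) = snd (nm ! l)}"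
        unfolding admL by (auto simp: prod_eq_iff)
      then show "(zweight \<alpha> \<beta> has_sum (real ((fst (nm ! l) + snd (nm ! l)) choose fst (nm ! l))
              * sum \<alpha> (Ua l) ^ fst (nm ! l) * sum \<beta> (D l) ^ snd (nm ! l)))
                 {w. admissible_seg E S l w \<and> (n0 (binw w), n1 (binw w)) = nm ! l}"
        using seg_nm[OF finU[of l] finD[of l], of "fst (nm ! l)" "snd (nm ! l)" \<alpha> \<beta>] by (auto intro: finite_has_sum)
    qed
    show ?thesis unfolding eqF by (rule case_gen[OF piZ S len hs B_pos beta_pos])
  qed
  have X: "pmf (map_pmf X_of p) (S, ns) = B * prod \<beta> UNIV *
         (\<Prod>l<CARD('s) - 1. sum \<alpha> (Ua l) ^ (ns ! l) / sum \<beta> (set (take (Suc l) S)) ^ (ns ! l + 1))"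
    if len: "length ns = CARD('s) - 1" for ns
  proof -
    have eqF: "X_of = (\<lambda>z. (Sseq z, map (\<lambda>w. n0 (binw w)) (segs z)))"
      by (rule ext) (simp add: X_of_def)
    have hs: "\<forall>l<CARD('s) - 1. (zweight \<alpha> \<beta> has_sum (sum \<alpha> (Ua l) ^ (ns ! l) / sum \<beta> (set (take (Suc l) S)) ^ (ns ! l + 1)))
                 {w. admissible_seg E S l w \<and> n0 (binw w) = ns ! l}"
    proof (intro allI impI)
      fix l assume l: "l < CARD('s) - 1"
      note Fl = F[OF l]
      have "(zweight \<alpha> \<beta> has_sum (sum \<alpha> (Ua l) ^ (ns ! l) / (1 - sum \<beta> (D l)) ^ Suc (ns ! l)))
                 {w. set w \<subseteq> Lt (Ua l) (D l) \<and> n0 (binw w) = ns ! l}"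
        by (rule seg_X[OF finU finD alpha_pos beta_pos]) (use Fl in simp)
      then show "(zweight \<alpha> \<beta> has_sum (sum \<alpha> (Ua l) ^ (ns ! l) / sum \<beta> (set (take (Suc l) S)) ^ (ns ! l + 1)))
                 {w. admissible_seg E S l w \<and> n0 (binw w) = ns ! l}"
        unfolding admL using Fl by simp
    qed
    show ?thesis unfolding eqF by (rule case_gen[OF piZ S len hs B_pos beta_pos])
  qed
  have Y: "pmf (map_pmf Y_of p) (S, ms) = B * prod \<beta> UNIV *
         (\<Prod>l<CARD('s) - 1. sum \<beta> (D l) ^ (ms ! l) / sum \<alpha> (Cset E (D l)) ^ (ms ! l + 1))"
    if len: "length ms = CARD('s) - 1" for ms
  proof -
    have eqF: "Y_of = (\<lambda>z. (Sseq z, map (\<lambda>w. n1 (binw w)) (segs z)))"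
      by (rule ext) (simp add: Y_of_def)
    have hs: "\<forall>l<CARD('s) - 1. (zweight \<alpha> \<beta> has_sum (sum \<beta> (D l) ^ (ms ! l) / sum \<alpha> (Cset E (D l)) ^ (ms ! l + 1)))
                 {w. admissible_seg E S l w \<and> n1 (binw w) = ms ! l}"
    proof (intro allI impI)
      fix l assume l: "l < CARD('s) - 1"
      note Fl = F[OF l]
      have "(zweight \<alpha> \<beta> has_sum (sum \<beta> (D l) ^ (ms ! l) / (1 - sum \<alpha> (Ua l)) ^ Suc (ms ! l)))
                 {w. set w \<subseteq> Lt (Ua l) (D l) \<and> n1 (binw w) = ms ! l}"
        by (rule seg_Y[OF finU finD alpha_pos beta_pos]) (use Fl in simp)
      then show "(zweight \<alpha> \<beta> has_sum (sum \<beta> (D l) ^ (ms ! l) / sum \<alpha> (Cset E (D l)) ^ (ms ! l + 1)))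
                 {w. admissible_seg E S l w \<and> n1 (binw w) = ms ! l}"
        unfolding admL using Fl by simp
    qed
    show ?thesis unfolding eqF by (rule case_gen[OF piZ S len hs B_pos beta_pos])
  qed
  have V: "pmf (map_pmf V_of p) (S, rs) = B * prod \<beta> UNIV *
         (\<Prod>l<CARD('s) - 1. (sum \<alpha> (Ua l) + sum \<beta> (D l)) ^ (rs ! l))"
    if len: "length rs = CARD('s) - 1" for rs
  proof -
    have eqF: "V_of = (\<lambda>z. (Sseq z, map (\<lambda>w. n0 (binw w) + n1 (binw w)) (segs z)))"
      by (rule ext) (simp add: V_of_def)
    have hs: "\<forall>l<CARD('s) - 1. (zweight \<alpha> \<beta> has_sum ((sum \<alpha> (Ua l) + sum \<beta> (D l)) ^ (rs ! l)))
                 {w. admissible_seg E S l w \<and> n0 (binw w) + n1 (binw w) = rs ! l}"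
    proof (intro allI impI)
      fix l
      have "{w. admissible_seg E S l w \<and> n0 (binw w) + n1 (binw w) = rs ! l} =
            {w. set w \<subseteq> Lt (Ua l) (D l) \<and> length w = rs ! l}"
        unfolding admL n0_n1_len lenb ..
      then show "(zweight \<alpha> \<beta> has_sum ((sum \<alpha> (Ua l) + sum \<beta> (D l)) ^ (rs ! l)))
                 {w. admissible_seg E S l w \<and> n0 (binw w) + n1 (binw w) = rs ! l}"
        using seg_len[OF finU[of l] finD[of l], of "rs ! l" \<alpha> \<beta>] by (auto intro: finite_has_sum)
    qed
    show ?thesis unfolding eqF by (rule case_gen[OF piZ S len hs B_pos beta_pos])
  qed
  have R: "pmf (map_pmf R_of p) S = B * prod \<beta> UNIV *
         (\<Prod>l<CARD('s) - 1. 1 / (sum \<beta> (set (take (Suc l) S)) - sum \<alpha> (Ua l)))"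
  proof -
    have eqF: "R_of = Sseq" by (rule ext) (simp add: R_of_def)
    have hs: "\<forall>l<CARD('s) - 1. (zweight \<alpha> \<beta> has_sum (1 / (sum \<beta> (set (take (Suc l) S)) - sum \<alpha> (Ua l))))
                 {w. admissible_seg E S l w}"
    proof (intro allI impI)
      fix l assume l: "l < CARD('s) - 1"
      note Fl = F[OF l]
      have "(zweight \<alpha> \<beta> has_sum (1 / (1 - (sum \<alpha> (Ua l) + sum \<beta> (D l))))) {w. set w \<subseteq> Lt (Ua l) (D l)}"
        by (rule seg_R[OF finU finD alpha_pos beta_pos]) (use Fl in simp)
      moreover have "1 - (sum \<alpha> (Ua l) + sum \<beta> (D l)) = sum \<beta> (set (take (Suc l) S)) - sum \<alpha> (Ua l)"
        using Fl by simp
      ultimately show "(zweight \<alpha> \<beta> has_sum (1 / (sum \<beta> (set (take (Suc l) S)) - sum \<alpha> (Ua l))))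
                 {w. admissible_seg E S l w}"
        unfolding admL by simp
    qed
    show ?thesis unfolding eqF by (rule case_R[OF piZ S hs B_pos beta_pos])
  qed
  show "(\<forall>ws. length ws = CARD('s) - 1 \<longrightarrow>
       pmf (map_pmf W_of p) (S, ws) = B * prod \<beta> UNIV *
         (\<Prod>l<CARD('s) - 1. sum \<alpha> (Uset E (set (take (Suc l) S))) ^ n0 (ws ! l)
                            * sum \<beta> (set (drop (Suc l) S)) ^ n1 (ws ! l))) \<and>
    (\<forall>nm. length nm = CARD('s) - 1 \<longrightarrow>
       pmf (map_pmf U_of p) (S, nm) = B * prod \<beta> UNIV *
         (\<Prod>l<CARD('s) - 1. real ((fst (nm ! l) + snd (nm ! l)) choose fst (nm ! l))
                            * sum \<alpha> (Uset E (set (take (Suc l) S))) ^ fst (nm ! l)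
                            * sum \<beta> (set (drop (Suc l) S)) ^ snd (nm ! l))) \<and>
    (\<forall>ns. length ns = CARD('s) - 1 \<longrightarrow>
       pmf (map_pmf X_of p) (S, ns) = B * prod \<beta> UNIV *
         (\<Prod>l<CARD('s) - 1. sum \<alpha> (Uset E (set (take (Suc l) S))) ^ (ns ! l)
                            / sum \<beta> (set (take (Suc l) S)) ^ (ns ! l + 1))) \<and>
    (\<forall>ms. length ms = CARD('s) - 1 \<longrightarrow>
       pmf (map_pmf Y_of p) (S, ms) = B * prod \<beta> UNIV *
         (\<Prod>l<CARD('s) - 1. sum \<beta> (set (drop (Suc l) S)) ^ (ms ! l)
                            / sum \<alpha> (Cset E (set (drop (Suc l) S))) ^ (ms ! l + 1))) \<and>
    (\<forall>rs. length rs = CARD('s) - 1 \<longrightarrow>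
       pmf (map_pmf V_of p) (S, rs) = B * prod \<beta> UNIV *
         (\<Prod>l<CARD('s) - 1. (sum \<alpha> (Uset E (set (take (Suc l) S)))
                              + sum \<beta> (set (drop (Suc l) S))) ^ (rs ! l))) \<and>
    pmf (map_pmf R_of p) S = B * prod \<beta> UNIV *
         (\<Prod>l<CARD('s) - 1. 1 / (sum \<beta> (set (take (Suc l) S))
                                  - sum \<alpha> (Uset E (set (take (Suc l) S)))))"
    using W U X Y V R unfolding Ua_def D_def by blast
qed


end
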